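(* Let $N\ge1$, $M=N$, and let $w_{mn}=N^{-1/2}\exp(-2\pi j\,mn/N)$ for $0\le m,n<N$ (the unitary discrete Fourier kernel, corresponding to infinite propagation distance). Suppose the targets are attainable: there exists $\boldsymbol C\in(\mathbb{C}\setminus\{0\})^N$ with $|i_m|^2=|p_m(\boldsymbol C)|^2$ for all $m$. Then for every $\boldsymbol c\in(\mathbb{C}\setminus\{0\})^N$ (in particular every iterate $\boldsymbol c[\tau]$ of the Wirtinger flow, regardless of the initial value) and every $n$, $$\Big|\frac{\partial L}{\partial\bar c_n}(\boldsymbol c)\Big|\le\frac{1}{|c_n|}.$$
   Context: Setup (WFCF). $j$ denotes the imaginary unit. For $\boldsymbol c=(c_0,\dots,c_{N-1})\in(\mathbb{C}\setminus\{0\})^N$ define $h_n(c_n)=c_n/|c_n|$, $p_m(\boldsymbol c)=\sum_{n=0}^{N-1}w_{mn}h_n(c_n)$, and the loss $L(\boldsymbol c)=\frac{1}{8N^2}\sum_{m=0}^{M-1}\big(|p_m(\boldsymbol c)|^2-|i_m|^2\big)^2$, where $|i_m|^2\ge0$ are given target values. Writing $c_n=a_n+jb_n$ with $a_n,b_n$ real, the Wirtinger derivative of a (real- or complex-valued) function $f$ with respect to $\bar c_n$ is $\frac{\partial f}{\partial \bar c_n}=\frac12\big(\frac{\partial f}{\partial a_n}+j\frac{\partial f}{\partial b_n}\big)$. The Wirtinger flow iteration is $c_n[\tau+1]=c_n[\tau]-\alpha\frac{\partial L}{\partial\bar c_n}(\boldsymbol c[\tau])$ with a real learning rate $\alpha>0$.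 *)

theory Defs
  imports "HOL-Analysis.Analysis"
begin

definition hphase :: "complex \<Rightarrow> complex" where
  "hphase z = z / complex_of_real (cmod z)"

definition pfield :: "(nat \<Rightarrow> nat \<Rightarrow> complex) \<Rightarrow> nat \<Rightarrow> (nat \<Rightarrow> complex) \<Rightarrow> nat \<Rightarrow> complex" where
  "pfield w N c m = (\<Sum>n<N. w m n * hphase (c n))"

definition loss :: "(nat \<Rightarrow> nat \<Rightarrow> complex) \<Rightarrow> nat \<Rightarrow> nat \<Rightarrow> (nat \<Rightarrow> complex) \<Rightarrow> (nat \<Rightarrow> complex) \<Rightarrow> real" where
  "loss w N M i c = 1 / (8 * (real N)^2) *
     (\<Sum>m<M. ((cmod (pfield w N c m))^2 - (cmod (i m))^2)^2)"

text \<open>Wirtinger derivative w.r.t. conj(c_n): (1/2)(dF/da_n + j dF/db_n), where c_n = a_n + j b_n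
  and the partial derivatives are ordinary real derivatives along the coordinate directions.\<close>
definition wirtinger_conj :: "((nat \<Rightarrow> complex) \<Rightarrow> real) \<Rightarrow> (nat \<Rightarrow> complex) \<Rightarrow> nat \<Rightarrow> complex" where
  "wirtinger_conj f c n =
     (1/2) * (complex_of_real (deriv (\<lambda>t::real. f (c(n := c n + complex_of_real t))) 0)
              + \<i> * complex_of_real (deriv (\<lambda>t::real. f (c(n := c n + \<i> * complex_of_real t))) 0))"

definition dft_kernel :: "nat \<Rightarrow> nat \<Rightarrow> nat \<Rightarrow> complex" where
  "dft_kernel N m n = exp (- 2 * complex_of_real pi * \<i> * of_nat m * of_nat n / of_nat N)
                       / complex_of_real (sqrt (real N))"

end

theory Submission
  imports Defs
begin

lemma hphase_norm_le: "cmod (hphase z) \<le> 1"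
  unfolding hphase_def by (cases "z = 0") (simp_all add: norm_divide)

lemma hphase_lip:
  assumes c0: "c0 \<noteq> 0"
  shows "cmod (hphase z - hphase c0) \<le> 2 * cmod (z - c0) / cmod c0"
proof (cases "z = 0")
  case True
  then show ?thesis using c0 by (simp add: hphase_def norm_divide)
next
  case False
  have nz: "cmod z > 0" "cmod c0 > 0" using False c0 by auto
  have eq: "hphase z - hphase c0 = (z - c0) / of_real (cmod c0) + z * of_real (1 / cmod z - 1 / cmod c0)"
    using nz unfolding hphase_def by (simp add: field_simps)
  have "cmod (hphase z - hphase c0) \<le> cmod ((z - c0) / of_real (cmod c0)) + cmod (z * of_real (1 / cmod z - 1 / cmod c0))"
    unfolding eq by (rule norm_triangle_ineq)
  also have "cmod ((z - c0) / of_real (cmod c0)) = cmod (z - c0) / cmod c0"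
    by (simp add: norm_divide)
  also have "cmod (z * of_real (1 / cmod z - 1 / cmod c0)) = cmod z * \<bar>1 / cmod z - 1 / cmod c0\<bar>"
    by (simp only: norm_mult norm_of_real)
  also have "1 / cmod z - 1 / cmod c0 = (cmod c0 - cmod z) / (cmod z * cmod c0)"
    using nz by (simp add: field_simps)
  also have "cmod z * \<bar>(cmod c0 - cmod z) / (cmod z * cmod c0)\<bar> = \<bar>cmod c0 - cmod z\<bar> / cmod c0"
    using nz by (simp add: abs_div abs_mult)
  also have "\<bar>cmod c0 - cmod z\<bar> \<le> cmod (z - c0)"
    by (metis norm_minus_commute norm_triangle_ineq3)
  hence "\<bar>cmod c0 - cmod z\<bar> / cmod c0 \<le> cmod (z - c0) / cmod c0"
    using nz by (simp add: divide_right_mono)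
  finally show ?thesis by (simp add: field_simps)
qed

lemma pfield_norm_le:
  assumes "\<forall>m k. cmod (w m k) \<le> b"
  shows "cmod (pfield w N c m) \<le> N * b"
proof -
  have "cmod (pfield w N c m) \<le> (\<Sum>k<N. cmod (w m k * hphase (c k)))"
    unfolding pfield_def by (rule norm_sum)
  also have "\<dots> \<le> of_nat (card {..<N}) * b"
  proof (rule sum_bounded_above)
    fix k
    have "cmod (w m k * hphase (c k)) = cmod (w m k) * cmod (hphase (c k))" by (simp add: norm_mult)
    also have "\<dots> \<le> b * 1"
      using assms hphase_norm_le by (intro mult_mono) (auto intro: order_trans[OF norm_ge_zero])
    finally show "cmod (w m k * hphase (c k)) \<le> b" by simp
  qed
  finally show ?thesis by simp
qed

lemma pfield_diff:
  assumes "n < N"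
  shows "pfield w N (c(n:=z)) m - pfield w N c m = w m n * (hphase z - hphase (c n))"
proof -
  have "pfield w N (c(n:=z)) m - pfield w N c m = (\<Sum>k<N. w m k * hphase ((c(n:=z)) k) - w m k * hphase (c k))"
    unfolding pfield_def by (simp add: sum_subtractf)
  also have "\<dots> = (\<Sum>k<N. if k = n then w m n * (hphase z - hphase (c n)) else 0)"
    by (rule sum.cong) (auto simp: algebra_simps)
  also have "\<dots> = w m n * (hphase z - hphase (c n))" using assms by simp
  finally show ?thesis .
qed

lemma deriv_bound:
  fixes f :: "real \<Rightarrow> real"
  assumes "f differentiable (at 0)" "\<forall>t. \<bar>f t - f 0\<bar> \<le> K * \<bar>t\<bar>"
  shows "\<bar>deriv f 0\<bar> \<le> K"
proof -
  have "(f has_real_derivative deriv f 0) (at 0)"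
    using assms(1) DERIV_deriv_iff_real_differentiable by blast
  hence "((\<lambda>h. (f (0 + h) - f 0) / h) \<longlongrightarrow> deriv f 0) (at 0)" by (simp add: DERIV_def)
  hence L: "((\<lambda>h. \<bar>(f h - f 0) / h\<bar>) \<longlongrightarrow> \<bar>deriv f 0\<bar>) (at 0)" by (intro tendsto_rabs) simp
  have "eventually (\<lambda>h. \<bar>(f h - f 0) / h\<bar> \<le> K) (at 0)"
    unfolding eventually_at_filter
  proof (intro always_eventually allI impI)
    fix h :: real assume "h \<noteq> 0"
    then show "\<bar>(f h - f 0) / h\<bar> \<le> K"
      using assms(2) by (simp add: abs_div pos_divide_le_eq)
  qed
  then show ?thesis using tendsto_upperbound[OF L] by simp
qed

lemma loss_lip:
  assumes wb: "\<forall>m k. cmod (w m k) \<le> b" and ib: "\<forall>m<N. cmod (i m)^2 \<le> (N*b)^2"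
    and c0: "c n \<noteq> 0" and nN: "n < N"
  shows "\<bar>loss w N N i (c(n:=z)) - loss w N N i c\<bar> \<le> (real N)^2 * b^4 * (cmod (z - c n) / cmod (c n))"
proof -
  define d where "d = cmod (z - c n) / cmod (c n)"
  define B where "B = real N * b"
  have b0: "b \<ge> 0" using wb by (auto intro: order_trans[OF norm_ge_zero])
  have d0: "d \<ge> 0" unfolding d_def by simp
  have B0: "B \<ge> 0" unfolding B_def using b0 by simp
  define T where "T m = ((cmod (pfield w N (c(n:=z)) m))^2 - (cmod (i m))^2)^2
      - ((cmod (pfield w N c m))^2 - (cmod (i m))^2)^2" for m
  have hterm: "\<bar>T m\<bar> \<le> 8 * B^3 * b * d" if mN: "m < N" for m
  proof -
    define P' where "P' = pfield w N (c(n:=z)) m"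
    define P where "P = pfield w N c m"
    define a where "a = (cmod P')^2"
    define bb where "bb = (cmod P)^2"
    define I where "I = (cmod (i m))^2"
    have nP': "cmod P' \<le> B" unfolding P'_def B_def by (rule pfield_norm_le[OF wb])
    have nP: "cmod P \<le> B" unfolding P_def B_def by (rule pfield_norm_le[OF wb])
    have hP: "cmod (P' - P) \<le> b * (2 * d)"
    proof -
      have "cmod (P' - P) = cmod (w m n) * cmod (hphase z - hphase (c n))"
        unfolding P'_def P_def pfield_diff[OF nN] by (simp add: norm_mult)
      also have "\<dots> \<le> b * (2 * d)"
        using wb hphase_lip[OF c0, of z] b0 unfolding d_def by (intro mult_mono) auto
      finally show ?thesis .
    qed
    have ha: "\<bar>a - bb\<bar> \<le> (b * (2 * d)) * (2 * B)"
    proof -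
      have "a - bb = (cmod P' - cmod P) * (cmod P' + cmod P)"
        unfolding a_def bb_def by (simp add: power2_eq_square algebra_simps)
      hence "\<bar>a - bb\<bar> = \<bar>cmod P' - cmod P\<bar> * (cmod P' + cmod P)" by (simp add: abs_mult)
      also have "\<dots> \<le> (b * (2 * d)) * (2 * B)"
      proof (rule mult_mono)
        show "\<bar>cmod P' - cmod P\<bar> \<le> b * (2 * d)"
          using hP norm_triangle_ineq3[of P' P] by linarith
        show "cmod P' + cmod P \<le> 2 * B" using nP nP' by linarith
      qed (use b0 d0 in auto)
      finally show ?thesis .
    qed
    have a1: "a \<le> B^2" unfolding a_def by (rule power_mono[OF nP']) simp
    have b1: "bb \<le> B^2" unfolding bb_def by (rule power_mono[OF nP]) simp
    have I1: "I \<le> B^2" unfolding I_def B_def using ib mN by simp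
    have a0: "a \<ge> 0" "bb \<ge> 0" "I \<ge> 0" unfolding a_def bb_def I_def by auto
    have hs: "\<bar>a + bb - 2 * I\<bar> \<le> 2 * B^2" using a1 b1 I1 a0 by linarith
    have "T m = (a - bb) * (a + bb - 2 * I)"
      unfolding T_def a_def bb_def I_def P'_def P_def by (simp add: power2_eq_square algebra_simps)
    hence "\<bar>T m\<bar> = \<bar>a - bb\<bar> * \<bar>a + bb - 2 * I\<bar>" by (simp add: abs_mult)
    also have "\<dots> \<le> ((b * (2 * d)) * (2 * B)) * (2 * B^2)"
      by (rule mult_mono[OF ha hs]) (use b0 d0 B0 in auto)
    also have "\<dots> = 8 * B^3 * b * d" by (simp add: power2_eq_square power3_eq_cube)
    finally show ?thesis .
  qed
  have "loss w N N i (c(n:=z)) - loss w N N i c = 1 / (8 * (real N)^2) * (\<Sum>m<N. T m)"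
    unfolding loss_def T_def by (simp add: sum_subtractf algebra_simps)
  hence "\<bar>loss w N N i (c(n:=z)) - loss w N N i c\<bar> = 1 / (8 * (real N)^2) * \<bar>\<Sum>m<N. T m\<bar>"
    by (simp add: abs_mult)
  also have "\<dots> \<le> 1 / (8 * (real N)^2) * (real N * (8 * B^3 * b * d))"
  proof (rule mult_left_mono)
    have "\<bar>\<Sum>m<N. T m\<bar> \<le> (\<Sum>m<N. \<bar>T m\<bar>)" by (rule sum_abs)
    also have "\<dots> \<le> of_nat (card {..<N}) * (8 * B^3 * b * d)"
      by (rule sum_bounded_above) (use hterm in auto)
    finally show "\<bar>\<Sum>m<N. T m\<bar> \<le> real N * (8 * B^3 * b * d)" by simp
  qed simp
  also have "\<dots> \<le> (real N)^2 * b^4 * d"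
  proof (cases "N = 0")
    case True then show ?thesis by simp
  next
    case False
    then show ?thesis unfolding B_def by (simp add: field_simps power2_eq_square power3_eq_cube power4_eq_xxxx)
  qed
  finally show ?thesis unfolding d_def .
qed

lemma diff_path:
  assumes c0: "c0 \<noteq> 0"
  shows "(\<lambda>t::real. hphase (c0 + u * of_real t)) differentiable (at 0)"
proof -
  have ofr: "(\<lambda>t::real. complex_of_real t) differentiable (at x within S)" for x S
    by (rule differentiableI[OF has_derivative_of_real[OF has_derivative_ident]])
  have g: "(\<lambda>t::real. c0 + u * of_real t) differentiable (at 0)"
    using ofr by (intro differentiable_add differentiable_mult differentiable_const) auto
  have nd: "norm differentiable (at (c0 + u * of_real (0::real)))" using c0 by simp
  have n: "(\<lambda>t::real. cmod (c0 + u * of_real t)) differentiable (at 0)"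
    using differentiable_compose[OF nd g] .
  have od: "(\<lambda>x::real. complex_of_real x) differentiable (at (cmod (c0 + u * of_real (0::real))))"
    by (rule ofr)
  have on: "(\<lambda>t::real. complex_of_real (cmod (c0 + u * of_real t))) differentiable (at 0)"
    using differentiable_compose[OF od n] .
  show ?thesis unfolding hphase_def
    by (rule differentiable_divide[OF g on]) (use c0 in simp)
qed

lemma diff_loss:
  assumes c0: "c n \<noteq> 0"
  shows "(\<lambda>t::real. loss w N M i (c(n := c n + u * of_real t))) differentiable (at 0)"
proof -
  have hk: "(\<lambda>t::real. w m k * hphase ((c(n := c n + u * of_real t)) k)) differentiable (at 0)" for m k
  proof (cases "k = n")
    case True
    then show ?thesis using diff_path[OF c0, of u] by (simp add: differentiable_mult)
  next
    case False
    then show ?thesis by simp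
  qed
  have p: "(\<lambda>t::real. pfield w N (c(n := c n + u * of_real t)) m) differentiable (at 0)" for m
    unfolding pfield_def by (rule differentiable_sum) (use hk in auto)
  have q: "(\<lambda>t::real. (cmod (pfield w N (c(n := c n + u * of_real t)) m))^2) differentiable (at 0)" for m
    using differentiable_compose[of "\<lambda>x. (norm x)^2", OF differentiable_sqnorm_at p] .
  have r: "(\<lambda>t::real. ((cmod (pfield w N (c(n := c n + u * of_real t)) m))^2 - (cmod (i m))^2)^2) differentiable (at 0)" for m
    by (intro differentiable_power differentiable_diff q differentiable_const)
  have s: "(\<lambda>t::real. \<Sum>m<M. ((cmod (pfield w N (c(n := c n + u * of_real t)) m))^2 - (cmod (i m))^2)^2) differentiable (at 0)"
    by (rule differentiable_sum) (use r in auto)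
  show ?thesis unfolding loss_def
    by (intro differentiable_mult differentiable_const s)
qed

lemma dft_norm: "cmod (dft_kernel N m k) = 1 / sqrt (real N)"
proof -
  have "exp (- 2 * complex_of_real pi * \<i> * of_nat m * of_nat k / of_nat N)
      = exp (\<i> * complex_of_real (- 2 * pi * m * k / N))" by (simp add: field_simps)
  hence "cmod (exp (- 2 * complex_of_real pi * \<i> * of_nat m * of_nat k / of_nat N)) = 1"
    by (simp only: norm_exp_i_times)
  thus ?thesis unfolding dft_kernel_def by (simp add: norm_divide)
qed

theorem theorem2:
  fixes N :: nat and i :: "nat \<Rightarrow> complex" and C c :: "nat \<Rightarrow> complex" and n :: nat
  assumes "N \<ge> 1"
    and "\<forall>k<N. C k \<noteq> 0"
    and "\<forall>m<N. (cmod (i m))^2 = (cmod (pfield (dft_kernel N) N C m))^2"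
    and "\<forall>k<N. c k \<noteq> 0"
    and "n < N"
  shows "cmod (wirtinger_conj (loss (dft_kernel N) N N i) c n) \<le> 1 / cmod (c n)"
proof -
  define w where "w = dft_kernel N"
  define b where "b = 1 / sqrt (real N)"
  have Npos: "real N > 0" using assms(1) by simp
  have wb: "\<forall>m k. cmod (w m k) \<le> b" unfolding w_def b_def by (simp add: dft_norm)
  have ib: "\<forall>m<N. cmod (i m)^2 \<le> (N*b)^2"
  proof (intro allI impI)
    fix m assume "m < N"
    have "cmod (pfield w N C m) \<le> N * b" by (rule pfield_norm_le[OF wb])
    hence "(cmod (pfield w N C m))^2 \<le> (N*b)^2" by (rule power_mono) simp
    thus "cmod (i m)^2 \<le> (N*b)^2" using assms(3) \<open>m < N\<close> unfolding w_def by simp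
  qed
  have b2: "b^2 = 1 / real N" unfolding b_def using Npos by (simp add: power_divide)
  have Nb: "(real N)^2 * b^4 = 1"
  proof -
    have "b^4 = (b^2)^2" by simp
    thus ?thesis using b2 Npos by (simp add: power2_eq_square field_simps)
  qed
  have c0: "c n \<noteq> 0" using assms(4,5) by simp
  define F where "F u t = loss w N N i (c(n := c n + u * of_real t))" for u t
  have bnd: "\<bar>deriv (F u) 0\<bar> \<le> 1 / cmod (c n)" if u1: "cmod u = 1" for u
  proof (rule deriv_bound)
    show "F u differentiable (at 0)" unfolding F_def by (rule diff_loss[of c n, OF c0])
    show "\<forall>t. \<bar>F u t - F u 0\<bar> \<le> 1 / cmod (c n) * \<bar>t\<bar>"
    proof
      fix t :: real
      have "\<bar>F u t - F u 0\<bar> \<le> (real N)^2 * b^4 * (cmod (c n + u * of_real t - c n) / cmod (c n))"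
        unfolding F_def using loss_lip[where c=c and n=n and z="c n + u * of_real t", OF wb ib c0 assms(5)] by simp
      also have "\<dots> = 1 / cmod (c n) * \<bar>t\<bar>" using Nb u1 by (simp add: norm_mult)
      finally show "\<bar>F u t - F u 0\<bar> \<le> 1 / cmod (c n) * \<bar>t\<bar>" .
    qed
  qed
  have e1: "(\<lambda>t::real. loss (dft_kernel N) N N i (c(n := c n + complex_of_real t))) = F 1"
    unfolding F_def w_def by simp
  have e2: "(\<lambda>t::real. loss (dft_kernel N) N N i (c(n := c n + \<i> * complex_of_real t))) = F \<i>"
    unfolding F_def w_def by simp
  have "cmod (wirtinger_conj (loss (dft_kernel N) N N i) c n)
      = cmod ((1/2) * (complex_of_real (deriv (F 1) 0) + \<i> * complex_of_real (deriv (F \<i>) 0)))"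
    unfolding wirtinger_conj_def e1 e2 ..
  also have "\<dots> \<le> (1/2) * (\<bar>deriv (F 1) 0\<bar> + \<bar>deriv (F \<i>) 0\<bar>)"
  proof -
    have "cmod (complex_of_real (deriv (F 1) 0) + \<i> * complex_of_real (deriv (F \<i>) 0))
        \<le> cmod (complex_of_real (deriv (F 1) 0)) + cmod (\<i> * complex_of_real (deriv (F \<i>) 0))"
      by (rule norm_triangle_ineq)
    thus ?thesis by (simp add: norm_mult)
  qed
  also have "\<dots> \<le> (1/2) * (1 / cmod (c n) + 1 / cmod (c n))"
    using bnd[of 1] bnd[of \<i>] by simp
  also have "\<dots> = 1 / cmod (c n)" by simp
  finally show ?thesis .
qed

end
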